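(* Let $G=(V,E)$ be a finite simple undirected graph, $k\ge1$ an integer, $S\subseteq V$ a $k$-plex, and $C\subseteq V$ with $C\cap S=\emptyset$. Let $v\in C$, and list the neighbors of $v$ in $C$ as $N(v)\cap C=\{v_1,\dots,v_d\}$ so that $|\overline{N}_{v_1}(S)|\le |\overline{N}_{v_2}(S)|\le\cdots\le|\overline{N}_{v_d}(S)|$. For $0\le i\le d$ let $T^i=\{v_1,\dots,v_i\}$ and let $$r=\max\Big\{i\in\{0,\dots,d\} : \sum_{u\in T^i}|\overline{N}_u(S)|\le \mathrm{sup}(S)\Big\}.$$ Then every $k$-plex $S'$ with $S\cup\{v\}\subseteq S'\subseteq S\cup C$ satisfies $|S'|\le |S|+k-|\overline{N}_v(S)|+r$.
   Context: $N(x)$ denotes the set of neighbors of $x$ in $G$ ($x\notin N(x)$). For $x\in V$ and $T\subseteq V$, $\overline{N}_x(T)=T\setminus N(x)$ is the set of non-neighbors of $x$ in $T$; note that if $x\in T$ then $x\in\overline{N}_x(T)$. A set $T\subseteq V$ is a $k$-plex if every vertex $u\in T$ satisfies $|N(u)\cap T|\ge |T|-k$ (equivalently $|\overline{N}_u(T)|\le k$). For a $k$-plex $S$, $\mathrm{sup}(S)=\sum_{w\in S}\big(k-|\overline{N}_w(S)|\big)$. *)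

theory Defs
  imports Main
begin

definition simple_graph :: "'a set \<Rightarrow> ('a \<Rightarrow> 'a \<Rightarrow> bool) \<Rightarrow> bool" where
  "simple_graph V E \<longleftrightarrow> finite V \<and> (\<forall>x y. E x y \<longrightarrow> x \<in> V \<and> y \<in> V)
     \<and> (\<forall>x y. E x y \<longrightarrow> E y x) \<and> (\<forall>x. \<not> E x x)"

definition nbrs :: "('a \<Rightarrow> 'a \<Rightarrow> bool) \<Rightarrow> 'a \<Rightarrow> 'a set" where
  "nbrs E x = {y. E x y}"

text \<open>Non-neighbours of x in T (contains x if x is in T).\<close>
definition non_nbrs :: "('a \<Rightarrow> 'a \<Rightarrow> bool) \<Rightarrow> 'a \<Rightarrow> 'a set \<Rightarrow> 'a set" where
  "non_nbrs E x T = T - nbrs E x"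

definition is_kplex :: "'a set \<Rightarrow> ('a \<Rightarrow> 'a \<Rightarrow> bool) \<Rightarrow> nat \<Rightarrow> 'a set \<Rightarrow> bool" where
  "is_kplex V E k T \<longleftrightarrow> T \<subseteq> V \<and> (\<forall>u\<in>T. card (nbrs E u \<inter> T) + k \<ge> card T)"

definition sup_plex :: "('a \<Rightarrow> 'a \<Rightarrow> bool) \<Rightarrow> nat \<Rightarrow> 'a set \<Rightarrow> int" where
  "sup_plex E k S = (\<Sum>w\<in>S. int k - int (card (non_nbrs E w S)))"

end

theory Submission
  imports Defs
begin

lemma prefix_sum_le:
  fixes f :: "'a \<Rightarrow> nat"
  assumes "distinct xs" "sorted (map f xs)" "A \<subseteq> set xs"
  shows "(\<Sum>u\<in>set (take (card A) xs). f u) \<le> (\<Sum>u\<in>A. f u)"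
  using assms
proof (induction xs arbitrary: A)
  case Nil
  then show ?case by simp
next
  case (Cons x xs)
  have fin: "finite A" using Cons.prems(3) finite_subset by blast
  show ?case
  proof (cases "A = {}")
    case True then show ?thesis by simp
  next
    case False
    have "\<exists>a\<in>A. f x \<le> f a \<and> A - {a} \<subseteq> set xs"
    proof (cases "x \<in> A")
      case True then show ?thesis using Cons.prems(3) by auto
    next
      case xn: False
      from False obtain a where a: "a \<in> A" by blast
      then have "a \<in> set xs" using Cons.prems(3) xn by auto
      then have "f x \<le> f a" using Cons.prems(2) by auto
      then show ?thesis using a Cons.prems(3) xn by auto
    qed
    then obtain a where a: "a \<in> A" "f x \<le> f a" "A - {a} \<subseteq> set xs" by blast
    have ca: "card A = Suc (card (A - {a}))" using a(1) fin
      by (metis card_Suc_Diff1)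
    have IH: "(\<Sum>u\<in>set (take (card (A - {a})) xs). f u) \<le> (\<Sum>u\<in>A - {a}. f u)"
      using Cons.IH Cons.prems a(3) by auto
    have "x \<notin> set (take (card (A - {a})) xs)" using Cons.prems(1)
      by (meson distinct.simps(2) in_set_takeD)
    then have "(\<Sum>u\<in>set (take (card A) (x#xs)). f u) = f x + (\<Sum>u\<in>set (take (card (A - {a})) xs). f u)"
      using ca by simp
    also have "\<dots> \<le> f a + (\<Sum>u\<in>A - {a}. f u)" using IH a(2) by simp
    also have "\<dots> = (\<Sum>u\<in>A. f u)" using a(1) fin by (simp add: sum.remove)
    finally show ?thesis .
  qed
qed

lemma card_filter_sum:
  "finite S \<Longrightarrow> card {w\<in>S. P w} = (\<Sum>w\<in>S. if P w then 1 else (0::nat))"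
  by (simp add: sum.If_cases Int_def)

lemma kplex_nn:
  assumes "is_kplex V E k T" "finite V" "u \<in> T"
  shows "card (non_nbrs E u T) \<le> k"
proof -
  have fT: "finite T" using assms unfolding is_kplex_def using finite_subset by blast
  have "card (non_nbrs E u T) = card T - card (nbrs E u \<inter> T)"
    unfolding non_nbrs_def
    using fT by (metis Diff_Int2 Int_lower2 card_Diff_subset finite_Int inf.idem)
  then show ?thesis using assms unfolding is_kplex_def by auto
qed

theorem lemma5:
  fixes V :: "'a set" and E :: "'a \<Rightarrow> 'a \<Rightarrow> bool" and k :: nat
    and S C S' :: "'a set" and v :: 'a and vs :: "'a list"
  assumes graph: "simple_graph V E"
    and k1: "k \<ge> 1"
    and S_plex: "is_kplex V E k S"
    and C_sub: "C \<subseteq> V"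
    and disj: "C \<inter> S = {}"
    and v_in: "v \<in> C"
    and vs_dist: "distinct vs"
    and vs_set: "set vs = nbrs E v \<inter> C"
    and vs_sorted: "sorted (map (\<lambda>u. card (non_nbrs E u S)) vs)"
    and S'_plex: "is_kplex V E k S'"
    and S'_lo: "S \<union> {v} \<subseteq> S'"
    and S'_hi: "S' \<subseteq> S \<union> C"
  shows "int (card S') \<le> int (card S) + int k - int (card (non_nbrs E v S))
     + int (Max {i. i \<le> length vs \<and>
          int (\<Sum>u\<in>set (take i vs). card (non_nbrs E u S)) \<le> sup_plex E k S})"
proof -
  have finV: "finite V" and sym: "\<And>x y. E x y \<Longrightarrow> E y x" and irr: "\<And>x. \<not> E x x"
    using graph unfolding simple_graph_def by auto
  have finS': "finite S'" using S'_plex finV unfolding is_kplex_def using finite_subset by blast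
  have finS: "finite S" using S'_lo finS' finite_subset by blast
  define A where "A = S' \<inter> set vs"
  define B where "B = S' - S - set vs"
  have finA: "finite A" and finB: "finite B" using finS' A_def B_def by auto
  have AS: "A \<inter> S = {}" using disj vs_set A_def by auto
  have S'eq: "S' = S \<union> A \<union> B" using S'_lo A_def B_def by auto
  have cS': "card S' = card S + card A + card B"
  proof -
    have "card S' = card (S \<union> A) + card B"
      using S'eq finA finB finS by (subst card_Un_disjoint[symmetric]) (auto simp: B_def A_def)
    also have "card (S \<union> A) = card S + card A" using AS finA finS by (simp add: card_Un_disjoint inf_commute)
    finally show ?thesis by simp
  qed
  have vS': "v \<in> S'" using S'_lo by auto
  have sub1: "non_nbrs E v S \<union> B \<subseteq> non_nbrs E v S'"
  proof
    fix x assume x: "x \<in> non_nbrs E v S \<union> B"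
    show "x \<in> non_nbrs E v S'"
    proof (cases "x \<in> B")
      case True
      then have "x \<in> S'" "x \<notin> S" "x \<notin> set vs" using B_def by auto
      then have "x \<in> C" using S'_hi by auto
      then have "\<not> E v x" using \<open>x \<notin> set vs\<close> vs_set nbrs_def by fastforce
      then show ?thesis using \<open>x \<in> S'\<close> unfolding non_nbrs_def nbrs_def by auto
    next
      case False
      then show ?thesis using x S'_lo unfolding non_nbrs_def by auto
    qed
  qed
  have dj1: "non_nbrs E v S \<inter> B = {}" using B_def by (auto simp: non_nbrs_def)
  have "card (non_nbrs E v S) + card B \<le> k"
  proof -
    have "card (non_nbrs E v S) + card B = card (non_nbrs E v S \<union> B)"
      using dj1 finS finB by (simp add: card_Un_disjoint non_nbrs_def)
    also have "\<dots> \<le> card (non_nbrs E v S')"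
      using sub1 finS' by (intro card_mono) (auto simp: non_nbrs_def)
    also have "\<dots> \<le> k" using kplex_nn[OF S'_plex finV vS'] .
    finally show ?thesis .
  qed
  note Bb = this
  define f where "f = (\<lambda>u. card (non_nbrs E u S))"
  have nnS: "\<And>u. non_nbrs E u S = {w\<in>S. \<not> E u w}" unfolding non_nbrs_def nbrs_def by auto
  have perw: "card {u\<in>A. \<not> E w u} + card (non_nbrs E w S) \<le> k" if w: "w \<in> S" for w
  proof -
    have "card {u\<in>A. \<not> E w u} + card (non_nbrs E w S) = card ({u\<in>A. \<not> E w u} \<union> non_nbrs E w S)"
      using AS finA finS by (subst card_Un_disjoint) (auto simp: non_nbrs_def)
    also have "\<dots> \<le> card (non_nbrs E w S')"
      using finS' S'_lo A_def by (intro card_mono) (auto simp: non_nbrs_def nbrs_def)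
    also have "\<dots> \<le> k" using kplex_nn[OF S'_plex finV] w S'_lo by auto
    finally show ?thesis .
  qed
  have "(\<Sum>u\<in>A. f u) = (\<Sum>u\<in>A. \<Sum>w\<in>S. if \<not> E u w then 1 else (0::nat))"
    unfolding f_def nnS using finS by (simp add: card_filter_sum)
  also have "\<dots> = (\<Sum>w\<in>S. \<Sum>u\<in>A. if \<not> E w u then 1 else (0::nat))"
    proof -
    have eq: "\<And>u w. E u w = E w u" using sym by blast
    show ?thesis by (subst sum.swap) (rule sum.cong, rule refl, rule sum.cong, rule refl, simp only: eq)
  qed
  also have "\<dots> = (\<Sum>w\<in>S. card {u\<in>A. \<not> E w u})"
    using finA by (simp add: card_filter_sum)
  finally have sumA: "(\<Sum>u\<in>A. f u) = (\<Sum>w\<in>S. card {u\<in>A. \<not> E w u})" .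
  have supA: "int (\<Sum>u\<in>A. f u) \<le> sup_plex E k S"
  proof -
    have "int (\<Sum>u\<in>A. f u) = (\<Sum>w\<in>S. int (card {u\<in>A. \<not> E w u}))"
      using sumA by simp
    also have "\<dots> \<le> (\<Sum>w\<in>S. int k - int (card (non_nbrs E w S)))"
      using perw by (intro sum_mono) force
    finally show ?thesis unfolding sup_plex_def .
  qed
  have Avs: "A \<subseteq> set vs" using A_def by auto
  have pre: "(\<Sum>u\<in>set (take (card A) vs). f u) \<le> (\<Sum>u\<in>A. f u)"
    using prefix_sum_le[OF vs_dist _ Avs, of f] vs_sorted f_def by simp
  have cAl: "card A \<le> length vs"
    using card_mono[OF _ Avs] distinct_card[OF vs_dist] by simp
  let ?M = "{i. i \<le> length vs \<and>
          int (\<Sum>u\<in>set (take i vs). card (non_nbrs E u S)) \<le> sup_plex E k S}"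
  have "int (\<Sum>u\<in>set (take (card A) vs). f u) \<le> sup_plex E k S"
    using pre supA by linarith
  then have "card A \<in> ?M" using cAl unfolding f_def by simp
  moreover have "finite ?M" by (rule finite_subset[of _ "{..length vs}"]) auto
  ultimately have "card A \<le> Max ?M" by simp
  then show ?thesis using cS' Bb by linarith
qed

end
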